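(* Let $P\in\mathfrak N_2$, let $r:P\to R$ be a retraction with $r[P(0)]=R(0)\subseteq P(0)$, and let $f:P(0)\to P(0)$ be an idempotent map with $|f[P(0)]|=|R(0)|$. Then there is a retraction $s:P\to S$ with $S\cong R$ and $s(x)=f(x)$ for all $x\in P(0)$.
   Context: All posets are finite; $h_P$ is the height; level sets $P(0)=\min P$, $P(k+1)=\min(P\setminus\bigcup_{i\le k}P(i))$; $R(0)$ is the set of minimal elements of $R$. $A<B$ means $a<b$ for all $a\in A,b\in B$. A retraction $r:P\to R$ is an idempotent order-preserving self-map of $P$ with image $R$. A section of width three is a poset $P$ of height $h_P\ge1$ with carrier $\{c_{k,j}:k\in[0,h_P],j\in\{0,1,2\}\}$ such that: $c_{0,j}<\dots<c_{h_P,j}$ for each $j$; each $\{c_{k,0},c_{k,1},c_{k,2}\}$ is an antichain; $c_{k,i}<c_{\ell,j}\Rightarrow c_{k,i+1}<c_{\ell,j+1}$ (indices mod 3); and for no $k$ is $P(k)<P(k+1)$. It is nice if for all $x<y$: $\{z:z>x\}\not\subseteq\{z:z\ge y\}$ and $\{z:z<y\}\not\subseteq\{z:z\le x\}$. $\mathfrak N_2$ is the class of nice sections of width three of height $\ge2$ with horizon 2, i.e. $P(k)<P(\ell)$ whenever $\ell\ge k+2$, and not $P(k)<P(k+1)$ for any $k$. *)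

theory Defs
  imports Main
begin

definition poset_on :: "'a set \<Rightarrow> ('a \<Rightarrow> 'a \<Rightarrow> bool) \<Rightarrow> bool" where
  "poset_on A le \<longleftrightarrow>
     (\<forall>x\<in>A. le x x) \<and>
     (\<forall>x\<in>A. \<forall>y\<in>A. le x y \<and> le y x \<longrightarrow> x = y) \<and>
     (\<forall>x\<in>A. \<forall>y\<in>A. \<forall>z\<in>A. le x y \<and> le y z \<longrightarrow> le x z)"

definition lt :: "('a \<Rightarrow> 'a \<Rightarrow> bool) \<Rightarrow> 'a \<Rightarrow> 'a \<Rightarrow> bool" where
  "lt le x y \<longleftrightarrow> le x y \<and> x \<noteq> y"

definition is_chain :: "'a set \<Rightarrow> ('a \<Rightarrow> 'a \<Rightarrow> bool) \<Rightarrow> bool" where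
  "is_chain C le \<longleftrightarrow> (\<forall>x\<in>C. \<forall>y\<in>C. le x y \<or> le y x)"

definition height :: "'a set \<Rightarrow> ('a \<Rightarrow> 'a \<Rightarrow> bool) \<Rightarrow> nat" where
  "height A le = Max {card C - 1 | C. C \<subseteq> A \<and> C \<noteq> {} \<and> is_chain C le}"

definition min_set :: "'a set \<Rightarrow> ('a \<Rightarrow> 'a \<Rightarrow> bool) \<Rightarrow> 'a set" where
  "min_set B le = {x\<in>B. \<not> (\<exists>y\<in>B. lt le y x)}"

text \<open>rest A le k = A minus the union of the levels P(0),...,P(k-1).\<close>
fun rest :: "'a set \<Rightarrow> ('a \<Rightarrow> 'a \<Rightarrow> bool) \<Rightarrow> nat \<Rightarrow> 'a set" where
  "rest A le 0 = A"
| "rest A le (Suc k) = rest A le k - min_set (rest A le k) le"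

definition level :: "'a set \<Rightarrow> ('a \<Rightarrow> 'a \<Rightarrow> bool) \<Rightarrow> nat \<Rightarrow> 'a set" where
  "level A le k = min_set (rest A le k) le"

definition set_less :: "('a \<Rightarrow> 'a \<Rightarrow> bool) \<Rightarrow> 'a set \<Rightarrow> 'a set \<Rightarrow> bool" where
  "set_less le X Y \<longleftrightarrow> (\<forall>x\<in>X. \<forall>y\<in>Y. lt le x y)"

definition section3 :: "'a set \<Rightarrow> ('a \<Rightarrow> 'a \<Rightarrow> bool) \<Rightarrow> bool" where
  "section3 A le \<longleftrightarrow> finite A \<and> poset_on A le \<and> height A le \<ge> 1 \<and>
     (\<exists>c :: nat \<Rightarrow> nat \<Rightarrow> 'a.
        A = {c k j | k j. k \<le> height A le \<and> j < 3} \<and>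
        (\<forall>j<3. \<forall>k<height A le. lt le (c k j) (c (Suc k) j)) \<and>
        (\<forall>k\<le>height A le. \<forall>i<3. \<forall>j<3. i \<noteq> j \<longrightarrow> \<not> le (c k i) (c k j)) \<and>
        (\<forall>k\<le>height A le. \<forall>l\<le>height A le. \<forall>i<3. \<forall>j<3.
            lt le (c k i) (c l j) \<longrightarrow> lt le (c k ((i+1) mod 3)) (c l ((j+1) mod 3)))) \<and>
     (\<forall>k<height A le. \<not> set_less le (level A le k) (level A le (Suc k)))"

definition nice :: "'a set \<Rightarrow> ('a \<Rightarrow> 'a \<Rightarrow> bool) \<Rightarrow> bool" where
  "nice A le \<longleftrightarrow> (\<forall>x\<in>A. \<forall>y\<in>A. lt le x y \<longrightarrow>
      \<not> ({z\<in>A. lt le x z} \<subseteq> {z\<in>A. le y z}) \<and>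
      \<not> ({z\<in>A. lt le z y} \<subseteq> {z\<in>A. le z x}))"

definition N2 :: "'a set \<Rightarrow> ('a \<Rightarrow> 'a \<Rightarrow> bool) \<Rightarrow> bool" where
  "N2 A le \<longleftrightarrow> section3 A le \<and> nice A le \<and> height A le \<ge> 2 \<and>
     (\<forall>k l. k + 2 \<le> l \<longrightarrow> set_less le (level A le k) (level A le l))"

definition retraction :: "'a set \<Rightarrow> ('a \<Rightarrow> 'a \<Rightarrow> bool) \<Rightarrow> ('a \<Rightarrow> 'a) \<Rightarrow> 'a set \<Rightarrow> bool" where
  "retraction A le r R \<longleftrightarrow>
     (\<forall>x\<in>A. r x \<in> A) \<and> (\<forall>x\<in>A. r (r x) = r x) \<and>
     (\<forall>x\<in>A. \<forall>y\<in>A. le x y \<longrightarrow> le (r x) (r y)) \<and> r ` A = R"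

definition order_iso :: "('a \<Rightarrow> 'a \<Rightarrow> bool) \<Rightarrow> 'a set \<Rightarrow> 'a set \<Rightarrow> bool" where
  "order_iso le S R \<longleftrightarrow> (\<exists>g. bij_betw g S R \<and> (\<forall>x\<in>S. \<forall>y\<in>S. le x y \<longleftrightarrow> le (g x) (g y)))"

end

theory Submission
  imports Defs
begin

lemma three_cases: "(j::nat) < 3 \<Longrightarrow> j = 0 \<or> j = 1 \<or> j = 2" by auto

definition tab :: "nat \<Rightarrow> nat \<Rightarrow> nat \<Rightarrow> nat \<Rightarrow> nat" where
  "tab x y z j = (if j = 0 then x else if j = 1 then y else z)"

definition idt :: "nat \<Rightarrow> nat \<Rightarrow> nat \<Rightarrow> bool" where
  "idt x y z \<longleftrightarrow> (x,y,z) \<in> {(0,0,0),(1,1,1),(2,2,2),(0,1,0),(0,1,1),(0,0,2),(0,2,2),(1,1,2),(2,1,2),(0,1,2)}"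

lemma idem_tuples:
  fixes p :: "nat \<Rightarrow> nat"
  assumes "\<forall>j<3. p j < 3" "\<forall>j<3. p (p j) = p j"
  shows "idt (p 0) (p 1) (p 2)"
proof -
  have p: "p 0 = 0 \<or> p 0 = 1 \<or> p 0 = 2" "p 1 = 0 \<or> p 1 = 1 \<or> p 1 = 2" "p 2 = 0 \<or> p 2 = 1 \<or> p 2 = 2"
    using assms(1) three_cases by auto
  have pi: "p (p 0) = p 0" "p (p 1) = p 1" "p (p 2) = p 2" using assms(2) by auto
  from p pi show ?thesis unfolding idt_def by (elim disjE) simp_all
qed

lemma comb0:
  assumes "idt x0 x1 x2" "idt y0 y1 y2" "card {x0,x1,x2} = card {y0,y1,y2}"
  shows "\<exists>u\<in>{1::nat,2}. \<exists>a<3. \<forall>j<3. (u * tab x0 x1 x2 j + a) mod 3 = tab y0 y1 y2 ((u*j+a) mod 3)"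
proof -
  have e: "\<And>P. (\<forall>j<(3::nat). P j) \<longleftrightarrow> P 0 \<and> P 1 \<and> P 2" using three_cases by auto
  have e2: "(\<exists>a<(3::nat). P a) \<longleftrightarrow> P 0 \<or> P 1 \<or> P 2" for P
  proof
    assume "\<exists>a<3. P a" then show "P 0 \<or> P 1 \<or> P 2" using three_cases by blast
  next
    have "0<(3::nat)" "1<(3::nat)" "2<(3::nat)" by auto
    then show "P 0 \<or> P 1 \<or> P 2 \<Longrightarrow> \<exists>a<3. P a" by blast
  qed
  show ?thesis unfolding e e2 using assms unfolding idt_def
    apply (simp only: insert_iff prod.inject empty_iff)
    by (elim disjE conjE) (simp_all add: tab_def card_insert_if)
qed

lemma m2: "(dd + 2*((x::nat) mod 3)) mod 3 = (dd + 2*x) mod 3"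
proof -
  have "(dd + 2*(x mod 3)) mod 3 = (dd + (2*(x mod 3)) mod 3) mod 3" by (rule mod_add_right_eq[symmetric])
  also have "(2*(x mod 3)) mod 3 = (2*x) mod 3" by (rule mod_mult_right_eq)
  also have "(dd + (2*x) mod 3) mod 3 = (dd + 2*x) mod 3" by (rule mod_add_right_eq)
  finally show ?thesis .
qed
lemma u1: "(j + a + 2*(i + a)) mod 3 = (j+2*i) mod (3::nat)"
proof -
  have "j + a + 2*(i + a) = (j+2*i) + 3*a" by simp
  then show ?thesis by simp
qed
lemma u2: "(2*j + a + (mk+dd) mod 3 + 2*(2*i + a + mk)) mod 3 = (dd + 2*((j+2*i) mod 3)) mod (3::nat)"
proof -
  have "(2*j + a + (mk+dd) mod 3 + 2*(2*i + a + mk)) mod 3 = ((mk+dd) mod 3 + (2*j + a + 2*(2*i + a + mk))) mod 3"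
    by (simp add: algebra_simps)
  also have "\<dots> = ((mk+dd) + (2*j + a + 2*(2*i + a + mk))) mod 3" by (simp add: mod_add_left_eq)
  also have "(mk+dd) + (2*j + a + 2*(2*i + a + mk)) = (dd + 2*(j+2*i)) + 3*(a+mk)" by simp
  also have "(dd + 2*(j+2*i) + 3*(a+mk)) mod 3 = (dd + 2*(j+2*i)) mod 3" by (rule mod_mult_self2)
  also have "\<dots> = (dd + 2*((j+2*i) mod 3)) mod 3" by (rule m2[symmetric])
  finally show ?thesis .
qed
lemma m: "((x::nat) mod 3 + 2*(y mod 3)) mod 3 = (x + 2*y) mod 3"
proof -
  have "(x mod 3 + 2*(y mod 3)) mod 3 = (x mod 3 + 2*y) mod 3" using m2[of "x mod 3" y] by simp
  also have "\<dots> = (x + 2*y) mod 3" by (rule mod_add_left_eq)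
  finally show ?thesis .
qed
lemma ex3: "(\<exists>a<(3::nat). P a) \<longleftrightarrow> P 0 \<or> P 1 \<or> P 2"
proof
  assume "\<exists>a<3. P a" then show "P 0 \<or> P 1 \<or> P 2" using three_cases by blast
next
  have "0<(3::nat)" "1<(3::nat)" "2<(3::nat)" by auto
  then show "P 0 \<or> P 1 \<or> P 2 \<Longrightarrow> \<exists>a<3. P a" by blast
qed

lemma arith_adj:
  fixes q :: "nat \<Rightarrow> bool"
  assumes "q 0" "\<not>(q 1 \<and> q 2)" "dd = (if q 1 then 1 else if q 2 then 2 else 0)"
    "u \<in> {1::nat,2}"
  shows "q ((j+2*i) mod 3) \<longleftrightarrow> q (((u*j + a + (if u=1 then 0 else (mk+dd) mod 3)) mod 3
            + 2*((u*i + a + (if u=1 then 0 else mk)) mod 3)) mod 3)"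
proof -
  define d where "d = (j+2*i) mod 3"
  have d3: "d < 3" unfolding d_def by simp
  have arg: "((u*j + a + (if u=1 then 0 else (mk+dd) mod 3)) mod 3
            + 2*((u*i + a + (if u=1 then 0 else mk)) mod 3)) mod 3 = (if u = 1 then d else (dd + 2*d) mod 3)"
  proof (cases "u = 1")
    case True then show ?thesis unfolding m d_def using u1 by simp
  next
    case False then have "u = 2" using assms(4) by simp
    then show ?thesis unfolding m d_def using u2 by simp
  qed
  have qd: "q d \<longleftrightarrow> q ((dd + 2*d) mod 3)"
    using d3 three_cases[of d] assms(1,2,3) by (cases "q 1"; cases "q 2"; auto simp: numeral_2_eq_2)
  show ?thesis unfolding arg d_def[symmetric] using qd by simp
qed

lemma affine_surj: assumes "u \<in> {1::nat,2}" "(j::nat) < 3" shows "\<exists>i<3. (u*i+b) mod 3 = j"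
proof -
  have e: "(u*i+b) mod 3 = (u*i + b mod 3) mod 3" for i by (rule mod_add_right_eq[symmetric])
  have "b mod 3 < 3" by simp
  then have "b mod 3 = 0 \<or> b mod 3 = 1 \<or> b mod 3 = 2" "j = 0 \<or> j = 1 \<or> j = 2" "u = 1 \<or> u = 2"
    using assms three_cases by auto
  then show ?thesis unfolding e ex3 
    by (elim disjE) (simp_all add: numeral_2_eq_2)
qed

lemma affine_inj: assumes "u \<in> {1::nat,2}" "(i::nat) < 3" "(j::nat) < 3" "(u*i+b) mod 3 = (u*j+b) mod 3"
  shows "i = j"
proof -
  have e: "(u*i+b) mod 3 = (u*i + b mod 3) mod 3" for i by (rule mod_add_right_eq[symmetric])
  have "b mod 3 < 3" by simp
  then have "b mod 3 = 0 \<or> b mod 3 = 1 \<or> b mod 3 = 2" "j = 0 \<or> j = 1 \<or> j = 2" "u = 1 \<or> u = 2"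
     "i = 0 \<or> i = 1 \<or> i = 2"
    using assms three_cases by auto
  then show ?thesis using assms(4) unfolding e
    by (elim disjE) (simp_all add: numeral_2_eq_2)
qed
lemma conj_retr:
  assumes phiA: "\<forall>x\<in>A. \<phi> x \<in> A" and surj: "\<forall>x\<in>A. \<exists>y\<in>A. \<phi> y = x"
  and iso: "\<forall>x\<in>A. \<forall>y\<in>A. le x y \<longleftrightarrow> le (\<phi> x) (\<phi> y)"
  and po: "poset_on A le"
  and ret: "retraction A le r R"
  and P0: "P0 \<subseteq> A" "\<forall>x\<in>P0. \<exists>y\<in>P0. \<phi> y = x"
  and comm: "\<forall>y\<in>P0. \<phi> (r y) = f (\<phi> y)"
  shows "\<exists>s S. retraction A le s S \<and> order_iso le S R \<and> (\<forall>x\<in>P0. s x = f x)"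
proof -
  have inj: "inj_on \<phi> A"
  proof (rule inj_onI)
    fix x y assume xy: "x \<in> A" "y \<in> A" "\<phi> x = \<phi> y"
    have pxy: "\<phi> x \<in> A" using phiA xy by blast
    have "le (\<phi> x) (\<phi> x)" using po pxy unfolding poset_on_def by blast
    then have "le (\<phi> x) (\<phi> y)" "le (\<phi> y) (\<phi> x)" using xy(3) by simp_all
    then have "le x y" "le y x" using iso xy(1,2) by blast+
    then show "x = y" using po xy unfolding poset_on_def by blast
  qed
  define \<psi> where "\<psi> = inv_into A \<phi>"
  have imA: "x \<in> \<phi> ` A" if "x \<in> A" for x using surj that by force
  have psiA: "\<psi> x \<in> A" if "x \<in> A" for x unfolding \<psi>_def using inv_into_into[OF imA[OF that]] .
  have phipsi: "\<phi> (\<psi> x) = x" if "x \<in> A" for x unfolding \<psi>_def using f_inv_into_f[OF imA[OF that]] .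
  have psiphi: "\<psi> (\<phi> x) = x" if "x \<in> A" for x unfolding \<psi>_def using inv_into_f_f[OF inj that] .
  have isopsi: "le x y \<longleftrightarrow> le (\<psi> x) (\<psi> y)" if "x \<in> A" "y \<in> A" for x y
  proof -
    have "le (\<psi> x) (\<psi> y) \<longleftrightarrow> le (\<phi> (\<psi> x)) (\<phi> (\<psi> y))" using iso psiA that by blast
    then show ?thesis using phipsi that by simp
  qed
  have rA: "\<forall>x\<in>A. r x \<in> A" "\<forall>x\<in>A. r (r x) = r x" "\<forall>x\<in>A. \<forall>y\<in>A. le x y \<longrightarrow> le (r x) (r y)" "r ` A = R"
    using ret unfolding retraction_def by auto
  have RA: "R \<subseteq> A" using rA by auto
  define s where "s = (\<lambda>x. \<phi> (r (\<psi> x)))"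
  have sx: "s x = \<phi> (r (\<psi> x))" for x unfolding s_def by simp
  have rpA: "r (\<psi> x) \<in> A" if "x \<in> A" for x using rA(1) psiA that by blast
  have psiAeq: "\<psi> ` A = A"
  proof
    show "\<psi> ` A \<subseteq> A" using psiA by blast
    show "A \<subseteq> \<psi> ` A"
    proof
      fix x assume x: "x \<in> A" then have "x = \<psi> (\<phi> x)" using psiphi by simp
      moreover have "\<phi> x \<in> A" using phiA x by blast
      ultimately show "x \<in> \<psi> ` A" by blast
    qed
  qed
  have "retraction A le s (\<phi> ` R)"
    unfolding retraction_def
  proof (intro conjI ballI impI)
    fix x assume "x \<in> A" then show "s x \<in> A" unfolding sx using rpA phiA by blast
  next
    fix x assume x: "x \<in> A"
    have "\<psi> (s x) = r (\<psi> x)" unfolding sx using psiphi rpA x by blast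
    then have "s (s x) = \<phi> (r (r (\<psi> x)))" using sx by simp
    also have "r (r (\<psi> x)) = r (\<psi> x)" using rA(2) psiA x by blast
    finally show "s (s x) = s x" using sx by simp
  next
    fix x y assume xy: "x \<in> A" "y \<in> A" "le x y"
    have "le (\<psi> x) (\<psi> y)" using isopsi[OF xy(1,2)] xy(3) by blast
    then have "le (r (\<psi> x)) (r (\<psi> y))" using rA(3) psiA xy(1,2) by blast
    moreover have "r (\<psi> x) \<in> A" "r (\<psi> y) \<in> A" using rA(1) psiA xy(1,2) by blast+
    ultimately show "le (s x) (s y)" unfolding sx using iso by blast
  next
    have "s ` A = \<phi> ` r ` \<psi> ` A" unfolding s_def by (simp add: image_comp)
    then show "s ` A = \<phi> ` R" using psiAeq rA(4) by simp
  qed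
  moreover have "order_iso le (\<phi> ` R) R"
    unfolding order_iso_def
  proof (intro exI conjI)
    show "bij_betw \<psi> (\<phi> ` R) R"
      unfolding bij_betw_def
    proof
      show "inj_on \<psi> (\<phi> ` R)"
      proof (rule inj_onI)
        fix x y assume xy: "x \<in> \<phi> ` R" "y \<in> \<phi> ` R" "\<psi> x = \<psi> y"
        have "x \<in> A" "y \<in> A" using xy(1,2) RA phiA by blast+
        then have "x = \<phi> (\<psi> x)" "y = \<phi> (\<psi> y)" using phipsi by simp_all
        then show "x = y" using xy(3) by simp
      qed
      have h: "\<forall>x\<in>R. \<psi> (\<phi> x) = x" using RA psiphi by blast
      show "\<psi> ` \<phi> ` R = R"
      proof (rule set_eqI)
        fix z show "z \<in> \<psi> ` \<phi> ` R \<longleftrightarrow> z \<in> R"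
        proof
          assume "z \<in> \<psi> ` \<phi> ` R" then obtain x where "x \<in> R" "z = \<psi> (\<phi> x)" by blast
          then show "z \<in> R" using h by simp
        next
          assume "z \<in> R" then have "z = \<psi> (\<phi> z)" using h by simp
          then show "z \<in> \<psi> ` \<phi> ` R" using \<open>z \<in> R\<close> by blast
        qed
      qed
    qed
    show "\<forall>x\<in>\<phi> ` R. \<forall>y\<in>\<phi> ` R. le x y = le (\<psi> x) (\<psi> y)"
    proof (intro ballI)
      fix x y assume "x \<in> \<phi> ` R" "y \<in> \<phi> ` R"
      then have "x \<in> A" "y \<in> A" using RA phiA by blast+
      then show "le x y = le (\<psi> x) (\<psi> y)" by (rule isopsi)
    qed
  qed
  moreover have "\<forall>x\<in>P0. s x = f x"
  proof
    fix x assume "x \<in> P0"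
    then obtain y where y: "y \<in> P0" "\<phi> y = x" using P0 by blast
    have "\<psi> x = y" using y P0(1) psiphi by blast
    then have "s x = \<phi> (r y)" using sx by simp
    also have "\<dots> = f x" using comm y by simp
    finally show "s x = f x" .
  qed
  ultimately show ?thesis by blast
qed

fun mseq :: "(nat \<Rightarrow> nat) \<Rightarrow> nat \<Rightarrow> nat" where
  "mseq d 0 = 0"
| "mseq d (Suc k) = (mseq d k + d k) mod 3"

locale sec3 =
  fixes A :: "'a set" and le :: "'a \<Rightarrow> 'a \<Rightarrow> bool" and c :: "nat \<Rightarrow> nat \<Rightarrow> 'a" and h :: nat
  assumes po: "poset_on A le"
  and Aeq: "A = {c k j | k j. k \<le> h \<and> j < 3}"
  and chn: "\<forall>j<3. \<forall>k<h. lt le (c k j) (c (Suc k) j)"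
  and anti: "\<forall>k\<le>h. \<forall>i<3. \<forall>j<3. i \<noteq> j \<longrightarrow> \<not> le (c k i) (c k j)"
  and cyc: "\<forall>k\<le>h. \<forall>l\<le>h. \<forall>i<3. \<forall>j<3.
            lt le (c k i) (c l j) \<longrightarrow> lt le (c k ((i+1) mod 3)) (c l ((j+1) mod 3))"
  and notfull: "\<forall>k<h. \<not> set_less le (level A le k) (level A le (Suc k))"
  and hor: "\<forall>k l. k + 2 \<le> l \<longrightarrow> set_less le (level A le k) (level A le l)"
begin

lemma cin: "k \<le> h \<Longrightarrow> j < 3 \<Longrightarrow> c k j \<in> A" using Aeq by auto

lemma refl: "x \<in> A \<Longrightarrow> le x x" using po unfolding poset_on_def by blast
lemma asym: "x \<in> A \<Longrightarrow> y \<in> A \<Longrightarrow> le x y \<Longrightarrow> le y x \<Longrightarrow> x = y"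
  using po unfolding poset_on_def by blast
lemma trans: "x \<in> A \<Longrightarrow> y \<in> A \<Longrightarrow> z \<in> A \<Longrightarrow> le x y \<Longrightarrow> le y z \<Longrightarrow> le x z"
  using po unfolding poset_on_def by blast

lemma chain_lt: "k < l \<Longrightarrow> l \<le> h \<Longrightarrow> j < 3 \<Longrightarrow> lt le (c k j) (c l j)"
proof (induction l)
  case 0 then show ?case by simp
next
  case (Suc l)
  have s: "lt le (c l j) (c (Suc l) j)" using chn Suc by auto
  show ?case
  proof (cases "k = l")
    case True then show ?thesis using s by simp
  next
    case False
    then have m1: "lt le (c k j) (c l j)" using Suc by auto
    have m2: "c k j \<in> A" "c l j \<in> A" "c (Suc l) j \<in> A" using cin Suc by auto
    note m = m1 m2
    have l1: "le (c k j) (c l j)" "c k j \<noteq> c l j" using m(1) unfolding lt_def by auto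
    have l2: "le (c l j) (c (Suc l) j)" "c l j \<noteq> c (Suc l) j" using s unfolding lt_def by auto
    have "le (c k j) (c (Suc l) j)" using trans[OF m(2,3,4) l1(1) l2(1)] .
    moreover have "c k j \<noteq> c (Suc l) j"
    proof
      assume e: "c k j = c (Suc l) j"
      then have "le (c l j) (c k j)" using l2(1) by simp
      then have "c k j = c l j" using asym[OF m(2,3) l1(1)] by simp
      then show False using l1(2) by simp
    qed
    ultimately show ?thesis unfolding lt_def by simp
  qed
qed

lemma below: "l < k \<Longrightarrow> k \<le> h \<Longrightarrow> i < 3 \<Longrightarrow> j < 3 \<Longrightarrow> \<not> le (c k i) (c l j)"
proof
  assume a: "l < k" "k \<le> h" "i < 3" "j < 3" "le (c k i) (c l j)"
  have l: "lt le (c l i) (c k i)" using chain_lt a by auto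
  have m: "c l i \<in> A" "c k i \<in> A" "c l j \<in> A" using cin a by auto
  have "le (c l i) (c l j)" using trans[OF m] l a(5) unfolding lt_def by blast
  moreover have "l \<le> h" using a by simp
  ultimately have "i = j" using anti a(3,4) by blast
  then have "le (c l i) (c k i)" "le (c k i) (c l i)" using l a(5) unfolding lt_def by auto
  then have "c l i = c k i" using asym m(1,2) by blast
  then show False using l unfolding lt_def by simp
qed

lemma cinj: "c k i = c l j \<Longrightarrow> k \<le> h \<Longrightarrow> l \<le> h \<Longrightarrow> i < 3 \<Longrightarrow> j < 3 \<Longrightarrow> k = l \<and> i = j"
proof -
  assume a: "c k i = c l j" "k \<le> h" "l \<le> h" "i < 3" "j < 3"
  have r: "le (c k i) (c l j)" using refl cin a by auto
  consider "k < l" | "l < k" | "k = l" by arith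
  then show ?thesis
  proof cases
    case 1 then show ?thesis using below[of k l j i] a r by auto
  next
    case 2 then show ?thesis using below[of l k i j] a r by auto
  next
    case 3
    have "le (c k i) (c k j)" using r 3 by simp
    then show ?thesis using anti a(2,4,5) 3 by blast
  qed
qed

lemma min_rows: "min_set {c l j | l j. k \<le> l \<and> l \<le> h \<and> j < 3} le = {c k j | j. j < 3 \<and> k \<le> h}"
  (is "min_set ?S le = ?R")
proof
  show "min_set ?S le \<subseteq> ?R"
  proof
    fix x assume x: "x \<in> min_set ?S le"
    then obtain l j where lj: "x = c l j" "k \<le> l" "l \<le> h" "j < 3" unfolding min_set_def by auto
    have "l = k"
    proof (rule ccontr)
      assume "l \<noteq> k"
      then have "lt le (c k j) x" using chain_lt lj by auto
      moreover have "k \<le> h" using lj by simp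
      then have "c k j \<in> ?S" using lj by blast
      ultimately show False using x unfolding min_set_def by auto
    qed
    then show "x \<in> ?R" using lj by auto
  qed
next
  show "?R \<subseteq> min_set ?S le"
  proof
    fix x assume "x \<in> ?R"
    then obtain j where j: "x = c k j" "j < 3" "k \<le> h" by auto
    have "\<not> lt le y x" if "y \<in> ?S" for y
    proof
      assume lty: "lt le y x"
      obtain l i where li: "y = c l i" "k \<le> l" "l \<le> h" "i < 3" using \<open>y \<in> ?S\<close> by auto
      show False
      proof (cases "l = k")
        case True
        then have "i \<noteq> j" using lty li j unfolding lt_def by auto
        then show False using anti lty li j True unfolding lt_def by auto
      next
        case False
        then show False using below[of k l i j] lty li j unfolding lt_def by auto
      qed
    qed
    then show "x \<in> min_set ?S le" unfolding min_set_def using j by auto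
  qed
qed

lemma rest_eq: "rest A le k = {c l j | l j. k \<le> l \<and> l \<le> h \<and> j < 3}"
proof (induction k)
  case 0 then show ?case using Aeq by simp
next
  case (Suc k)
  have "rest A le (Suc k) = {c l j | l j. k \<le> l \<and> l \<le> h \<and> j < 3} - {c k j | j. j < 3 \<and> k \<le> h}"
    using Suc min_rows by simp
  also have "\<dots> = {c l j | l j. Suc k \<le> l \<and> l \<le> h \<and> j < 3}"
  proof (intro set_eqI iffI)
    fix x assume "x \<in> {c l j | l j. k \<le> l \<and> l \<le> h \<and> j < 3} - {c k j | j. j < 3 \<and> k \<le> h}"
    then obtain l j where lj: "x = c l j" "k \<le> l" "l \<le> h" "j < 3" "x \<notin> {c k j | j. j < 3 \<and> k \<le> h}" by blast
    have "l \<noteq> k" using lj by auto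
    then have "Suc k \<le> l" using lj by simp
    then show "x \<in> {c l j | l j. Suc k \<le> l \<and> l \<le> h \<and> j < 3}" using lj by blast
  next
    fix x assume "x \<in> {c l j | l j. Suc k \<le> l \<and> l \<le> h \<and> j < 3}"
    then obtain l j where lj: "x = c l j" "Suc k \<le> l" "l \<le> h" "j < 3" by auto
    have "x \<noteq> c k i" if "i < 3" "k \<le> h" for i using cinj[of l j k i] lj that by auto
    moreover have "k \<le> l" using lj by simp
    ultimately show "x \<in> {c l j | l j. k \<le> l \<and> l \<le> h \<and> j < 3} - {c k j | j. j < 3 \<and> k \<le> h}"
      using lj by blast
  qed
  finally show ?case .
qed

lemma level_eq: "level A le k = {c k j | j. j < 3 \<and> k \<le> h}"
  unfolding level_def rest_eq min_rows ..

lemma hor_lt: assumes "k + 2 \<le> l" "l \<le> h" "i < 3" "j < 3" shows "lt le (c k i) (c l j)"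
proof -
  have sl: "set_less le (level A le k) (level A le l)" using hor assms(1) by blast
  have "k \<le> h" using assms by simp
  then have "c k i \<in> level A le k" "c l j \<in> level A le l" unfolding level_eq using assms by blast+
  then show ?thesis using sl unfolding set_less_def by blast
qed

lemma le_lt: assumes "k \<noteq> l" "k \<le> h" "l \<le> h" "i < 3" "j < 3"
  shows "le (c k i) (c l j) = lt le (c k i) (c l j)"
proof -
  have "c k i \<noteq> c l j" using cinj[of k i l j] assms by blast
  then show ?thesis unfolding lt_def by simp
qed

lemma shift1: assumes "k < h" "i < 3" "j < 3" "le (c k i) (c (Suc k) j)"
  shows "le (c k ((i+1) mod 3)) (c (Suc k) ((j+1) mod 3))"
proof -
  have kh: "k \<le> h" "Suc k \<le> h" using assms by auto
  have "lt le (c k i) (c (Suc k) j)" using le_lt[of k "Suc k" i j] assms kh by simp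
  then have "lt le (c k ((i+1) mod 3)) (c (Suc k) ((j+1) mod 3))" using cyc kh assms(2,3) by blast
  then show ?thesis unfolding lt_def by simp
qed

lemma mod3_cycle: "(x::nat) < 3 \<Longrightarrow> (((((x+1) mod 3)+1) mod 3)+1) mod 3 = x"
proof -
  assume "x < 3" then have "x = 0 \<or> x = 1 \<or> x = 2" by auto
  then show ?thesis by (elim disjE) simp_all
qed

lemma shift_iff: assumes "k < h" "i < 3" "j < 3"
  shows "le (c k i) (c (Suc k) j) \<longleftrightarrow> le (c k ((i+1) mod 3)) (c (Suc k) ((j+1) mod 3))"
proof
  assume "le (c k i) (c (Suc k) j)" then show "le (c k ((i+1) mod 3)) (c (Suc k) ((j+1) mod 3))"
    using shift1 assms by blast
next
  assume a: "le (c k ((i+1) mod 3)) (c (Suc k) ((j+1) mod 3))"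
  have b: "le (c k ((((i+1) mod 3)+1) mod 3)) (c (Suc k) ((((j+1) mod 3)+1) mod 3))"
    by (rule shift1[OF assms(1) _ _ a]) simp_all
  have "le (c k ((((((i+1) mod 3)+1) mod 3)+1) mod 3)) (c (Suc k) ((((((j+1) mod 3)+1) mod 3)+1) mod 3))"
    by (rule shift1[OF assms(1) _ _ b]) simp_all
  moreover have "(((((i+1) mod 3)+1) mod 3)+1) mod 3 = i" "(((((j+1) mod 3)+1) mod 3)+1) mod 3 = j"
    using assms mod3_cycle by auto
  ultimately show "le (c k i) (c (Suc k) j)" by simp
qed

lemma shift2: assumes "k < h" "i < 3" "j < 3"
  shows "le (c k i) (c (Suc k) j) \<longleftrightarrow> le (c k ((i+2) mod 3)) (c (Suc k) ((j+2) mod 3))"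
proof -
  have e1: "le (c k i) (c (Suc k) j) \<longleftrightarrow> le (c k ((i+1) mod 3)) (c (Suc k) ((j+1) mod 3))"
    by (rule shift_iff[OF assms])
  have e2: "le (c k ((i+1) mod 3)) (c (Suc k) ((j+1) mod 3)) \<longleftrightarrow> le (c k ((((i+1) mod 3)+1) mod 3)) (c (Suc k) ((((j+1) mod 3)+1) mod 3))"
    by (rule shift_iff[OF assms(1)]) simp_all
  have m: "(((i+1) mod 3)+1) mod 3 = (i+2) mod 3" "(((j+1) mod 3)+1) mod 3 = (j+2) mod 3"
    by (simp_all add: mod_Suc_eq)
  show ?thesis using e1 e2 unfolding m by simp
qed

lemma shiftQ: assumes "k < h" "i < 3" "j < 3"
  shows "le (c k i) (c (Suc k) j) \<longleftrightarrow> le (c k 0) (c (Suc k) ((j + 2*i) mod 3))"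
proof -
  have "i = 0 \<or> i = 1 \<or> i = 2" using assms by auto
  then show ?thesis
  proof (elim disjE)
    assume "i = 0" then show ?thesis using assms by simp
  next
    assume i: "i = 1"
    have "le (c k i) (c (Suc k) j) \<longleftrightarrow> le (c k ((i+2) mod 3)) (c (Suc k) ((j+2) mod 3))"
      by (rule shift2[OF assms])
    then show ?thesis using i by simp
  next
    assume i: "i = 2"
    have "le (c k i) (c (Suc k) j) \<longleftrightarrow> le (c k ((i+1) mod 3)) (c (Suc k) ((j+1) mod 3))"
      by (rule shift_iff[OF assms])
    moreover have "j = 0 \<or> j = 1 \<or> j = 2" using assms by auto
    then have "(j+1) mod 3 = (j + 2*2) mod 3" by (elim disjE) simp_all
    ultimately show ?thesis using i by simp
  qed
qed

lemma notboth: "k < h \<Longrightarrow> \<not> (le (c k 0) (c (Suc k) 1) \<and> le (c k 0) (c (Suc k) 2))"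
proof
  assume a: "k < h" "le (c k 0) (c (Suc k) 1) \<and> le (c k 0) (c (Suc k) 2)"
  have q0: "le (c k 0) (c (Suc k) 0)" using chn a unfolding lt_def by auto
  have "\<forall>d<3. le (c k 0) (c (Suc k) d)" using a q0 three_cases by auto
  then have "le (c k i) (c (Suc k) j)" if "i<3" "j<3" for i j using shiftQ[of k i j] that a by auto
  then have "lt le (c k i) (c (Suc k) j)" if "i<3" "j<3" for i j using le_lt[of k "Suc k" i j] that a by auto
  then have "set_less le (level A le k) (level A le (Suc k))" unfolding set_less_def level_eq by auto
  then show False using notfull a by auto
qed


definition dl :: "nat \<Rightarrow> nat" where
  "dl k = (if le (c k 0) (c (Suc k) 1) then 1 else if le (c k 0) (c (Suc k) 2) then 2 else 0)"

definition T :: "nat \<Rightarrow> nat \<Rightarrow> nat \<Rightarrow> nat \<Rightarrow> nat" where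
  "T u a k j = (u*j + a + (if u = 1 then 0 else mseq dl k)) mod 3"

lemma T_lt: "T u a k j < 3" unfolding T_def by simp

lemma T_inj: "u \<in> {1,2} \<Longrightarrow> i < 3 \<Longrightarrow> j < 3 \<Longrightarrow> T u a k i = T u a k j \<Longrightarrow> i = j"
  unfolding T_def using affine_inj[of u i j] by (simp add: add.assoc)

lemma same_row: "k \<le> h \<Longrightarrow> i < 3 \<Longrightarrow> j < 3 \<Longrightarrow> le (c k i) (c k j) \<longleftrightarrow> i = j"
  using anti refl cin by blast

lemma key:
  assumes u: "u \<in> {1,2}" and "k \<le> h" "l \<le> h" "i < 3" "j < 3"
  shows "le (c k i) (c l j) \<longleftrightarrow> le (c k (T u a k i)) (c l (T u a l j))"
proof -
  consider "k = l" | "l < k" | "l = Suc k" | "Suc (Suc k) \<le> l" by arith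
  then show ?thesis
  proof cases
    case 1
    have e1: "le (c k i) (c l j) \<longleftrightarrow> i = j" using same_row[of k i j] assms 1 by simp
    have e2: "le (c k (T u a k i)) (c l (T u a l j)) \<longleftrightarrow> T u a k i = T u a k j"
      using same_row[of k "T u a k i" "T u a k j"] assms 1 T_lt by simp
    have e3: "T u a k i = T u a k j \<longleftrightarrow> i = j" using T_inj[OF u assms(4,5)] by blast
    show ?thesis unfolding e1 e2 e3 ..
  next
    case 2
    have "\<not> le (c k i) (c l j)" using below[OF 2 assms(2,4,5)] .
    moreover have "\<not> le (c k (T u a k i)) (c l (T u a l j))" using below[OF 2 assms(2) T_lt T_lt] .
    ultimately show ?thesis by blast
  next
    case 3
    have kh: "k < h" using 3 assms by simp
    define q where "q = (\<lambda>d. le (c k 0) (c (Suc k) d))"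
    have q0: "q 0" unfolding q_def using chn kh unfolding lt_def by auto
    have qn: "\<not> (q 1 \<and> q 2)" unfolding q_def using notboth kh by simp
    have dd: "dl k = (if q 1 then 1 else if q 2 then 2 else 0)" unfolding q_def dl_def by simp
    have "le (c k i) (c l j) \<longleftrightarrow> q ((j+2*i) mod 3)" unfolding q_def 3 by (rule shiftQ[OF kh assms(4,5)])
    also have "\<dots> \<longleftrightarrow> q ((T u a l j + 2 * T u a k i) mod 3)"
      unfolding T_def 3 mseq.simps using arith_adj[OF q0 qn dd u, of j i a "mseq dl k"] by simp
    also have "\<dots> \<longleftrightarrow> le (c k (T u a k i)) (c l (T u a l j))"
      unfolding q_def 3 by (rule shiftQ[OF kh T_lt T_lt, symmetric])
    finally show ?thesis .
  next
    case 4
    have "lt le (c k i) (c l j)" using hor_lt[of k l i j] 4 assms by simp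
    moreover have "lt le (c k (T u a k i)) (c l (T u a l j))" using hor_lt[of k l] 4 assms T_lt by simp
    ultimately show ?thesis unfolding lt_def by blast
  qed
qed

definition cc :: "nat \<times> nat \<Rightarrow> 'a" where "cc = (\<lambda>(k,j). c k j)"

definition phi :: "nat \<Rightarrow> nat \<Rightarrow> 'a \<Rightarrow> 'a" where
  "phi u a x = (case inv_into {(k,j). k \<le> h \<and> j < 3} cc x of (k,j) \<Rightarrow> c k (T u a k j))"

lemma cc_inj: "inj_on cc {(k,j). k \<le> h \<and> j < 3}"
  unfolding cc_def by (rule inj_onI) (auto dest: cinj)

lemma phi_c: "k \<le> h \<Longrightarrow> j < 3 \<Longrightarrow> phi u a (c k j) = c k (T u a k j)"
proof -
  assume a: "k \<le> h" "j < 3"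
  have "inv_into {(k,j). k \<le> h \<and> j < 3} cc (cc (k,j)) = (k,j)"
    using inv_into_f_f[OF cc_inj] a by auto
  then show ?thesis unfolding phi_def by (simp add: cc_def)
qed

lemma phi_props:
  assumes u: "u \<in> {1,2}"
  shows "\<forall>x\<in>A. phi u a x \<in> A" "\<forall>x\<in>A. \<exists>y\<in>A. phi u a y = x"
    "\<forall>x\<in>A. \<forall>y\<in>A. le x y \<longleftrightarrow> le (phi u a x) (phi u a y)"
proof -
  show "\<forall>x\<in>A. phi u a x \<in> A" using Aeq phi_c cin T_lt by auto
  show "\<forall>x\<in>A. \<exists>y\<in>A. phi u a y = x"
  proof
    fix x assume "x \<in> A"
    then obtain k j where kj: "x = c k j" "k \<le> h" "j < 3" using Aeq by auto
    obtain i where i: "i < 3" "(u*i + (a + (if u = 1 then 0 else mseq dl k))) mod 3 = j"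
      using affine_surj[OF u kj(3)] by blast
    have "phi u a (c k i) = x" using phi_c kj i unfolding T_def by (simp add: add.assoc)
    then show "\<exists>y\<in>A. phi u a y = x" using cin kj i by blast
  qed
  show "\<forall>x\<in>A. \<forall>y\<in>A. le x y \<longleftrightarrow> le (phi u a x) (phi u a y)"
  proof (intro ballI)
    fix x y assume "x \<in> A" "y \<in> A"
    then obtain k i l j where kl: "x = c k i" "k \<le> h" "i < 3" "y = c l j" "l \<le> h" "j < 3" using Aeq by blast
    show "le x y \<longleftrightarrow> le (phi u a x) (phi u a y)"
      unfolding kl(1,4) phi_c[OF kl(2,3)] phi_c[OF kl(5,6)] by (rule key[OF u kl(2,5,3,6)])
  qed
qed

end


theorem corollary4p2:
  fixes A :: "'a set" and le :: "'a \<Rightarrow> 'a \<Rightarrow> bool"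
    and r f :: "'a \<Rightarrow> 'a" and R :: "'a set"
  assumes "N2 A le"
    and "retraction A le r R"
    and "r ` level A le 0 = min_set R le"
    and "min_set R le \<subseteq> level A le 0"
    and "\<forall>x\<in>level A le 0. f x \<in> level A le 0"
    and "\<forall>x\<in>level A le 0. f (f x) = f x"
    and "card (f ` level A le 0) = card (min_set R le)"
  shows "\<exists>s S. retraction A le s S \<and> order_iso le S R \<and> (\<forall>x\<in>level A le 0. s x = f x)"
proof -
  have n2: "section3 A le \<and> nice A le \<and> 2 \<le> height A le \<and> (\<forall>k l. k + 2 \<le> l \<longrightarrow> set_less le (level A le k) (level A le l))"
    using assms(1) unfolding N2_def .
  have sec: "section3 A le" using n2 by (rule conjunct1)
  have hor: "\<forall>k l. k + 2 \<le> l \<longrightarrow> set_less le (level A le k) (level A le l)"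
    using n2[THEN conjunct2, THEN conjunct2, THEN conjunct2] .
  have s3: "finite A \<and> poset_on A le \<and> height A le \<ge> 1 \<and> (\<exists>c :: nat \<Rightarrow> nat \<Rightarrow> 'a.
        A = {c k j | k j. k \<le> height A le \<and> j < 3} \<and>
        (\<forall>j<3. \<forall>k<height A le. lt le (c k j) (c (Suc k) j)) \<and>
        (\<forall>k\<le>height A le. \<forall>i<3. \<forall>j<3. i \<noteq> j \<longrightarrow> \<not> le (c k i) (c k j)) \<and>
        (\<forall>k\<le>height A le. \<forall>l\<le>height A le. \<forall>i<3. \<forall>j<3.
            lt le (c k i) (c l j) \<longrightarrow> lt le (c k ((i+1) mod 3)) (c l ((j+1) mod 3)))) \<and>
     (\<forall>k<height A le. \<not> set_less le (level A le k) (level A le (Suc k)))"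
    using sec unfolding section3_def .
  have po: "poset_on A le" using s3[THEN conjunct2, THEN conjunct1] .
  note ex = s3[THEN conjunct2, THEN conjunct2, THEN conjunct2, THEN conjunct1]
  have nf: "\<forall>k<height A le. \<not> set_less le (level A le k) (level A le (Suc k))"
    using s3[THEN conjunct2, THEN conjunct2, THEN conjunct2, THEN conjunct2] .
  obtain c :: "nat \<Rightarrow> nat \<Rightarrow> 'a" where cc: "A = {c k j | k j. k \<le> height A le \<and> j < 3} \<and>
        (\<forall>j<3. \<forall>k<height A le. lt le (c k j) (c (Suc k) j)) \<and>
        (\<forall>k\<le>height A le. \<forall>i<3. \<forall>j<3. i \<noteq> j \<longrightarrow> \<not> le (c k i) (c k j)) \<and>
        (\<forall>k\<le>height A le. \<forall>l\<le>height A le. \<forall>i<3. \<forall>j<3.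
            lt le (c k i) (c l j) \<longrightarrow> lt le (c k ((i+1) mod 3)) (c l ((j+1) mod 3)))"
    using ex by (elim exE)
  have "sec3 A le c (height A le)"
    by (rule sec3.intro[OF po cc[THEN conjunct1] cc[THEN conjunct2, THEN conjunct1]
          cc[THEN conjunct2, THEN conjunct2, THEN conjunct1] cc[THEN conjunct2, THEN conjunct2, THEN conjunct2]
          nf hor])
  then interpret S: sec3 A le c "height A le" .
  define P0 where "P0 = level A le 0"
  have P0: "P0 = {c 0 j | j. j < 3}" unfolding P0_def S.level_eq by simp
  have rA: "\<forall>x\<in>A. r x \<in> A" "\<forall>x\<in>A. r (r x) = r x"
    using assms(2) unfolding retraction_def by blast+
  have P0A: "P0 \<subseteq> A" unfolding P0 using S.cin by blast
  have rP0: "\<forall>x\<in>P0. r x \<in> P0" using assms(3,4) unfolding P0_def by blast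
  have fP0: "\<forall>x\<in>P0. f x \<in> P0" using assms(5) unfolding P0_def by blast
  define p where "p j = (SOME i. i<3 \<and> r (c 0 j) = c 0 i)" for j
  define q where "q j = (SOME i. i<3 \<and> f (c 0 j) = c 0 i)" for j
  have p: "p j < 3 \<and> r (c 0 j) = c 0 (p j)" if "j < 3" for j
  proof -
    have "c 0 j \<in> P0" unfolding P0 using that by blast
    then have "r (c 0 j) \<in> P0" using rP0 by blast
    then have "\<exists>i. i<3 \<and> r (c 0 j) = c 0 i" unfolding P0 by blast
    then show ?thesis unfolding p_def by (rule someI_ex)
  qed
  have q: "q j < 3 \<and> f (c 0 j) = c 0 (q j)" if "j < 3" for j
  proof -
    have "c 0 j \<in> P0" unfolding P0 using that by blast
    then have "f (c 0 j) \<in> P0" using fP0 by blast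
    then have "\<exists>i. i<3 \<and> f (c 0 j) = c 0 i" unfolding P0 by blast
    then show ?thesis unfolding q_def by (rule someI_ex)
  qed
  have c0inj: "i = j" if "c 0 i = c 0 j" "i < 3" "j < 3" for i j
    using S.cinj[OF that(1) _ _ that(2,3)] by simp
  have pid: "\<forall>j<3. p (p j) = p j"
  proof (intro allI impI)
    fix j :: nat assume j: "j < 3"
    have e1: "r (c 0 j) = c 0 (p j)" "p j < 3" using p[OF j] by blast+
    have e2: "r (c 0 (p j)) = c 0 (p (p j))" "p (p j) < 3" using p[OF e1(2)] by blast+
    have "c 0 j \<in> A" using S.cin j by simp
    then have "r (r (c 0 j)) = r (c 0 j)" using rA(2) by blast
    then have "c 0 (p (p j)) = c 0 (p j)" using e1 e2 by simp
    then show "p (p j) = p j" using c0inj e1(2) e2(2) by blast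
  qed
  have qid: "\<forall>j<3. q (q j) = q j"
  proof (intro allI impI)
    fix j :: nat assume j: "j < 3"
    have e1: "f (c 0 j) = c 0 (q j)" "q j < 3" using q[OF j] by blast+
    have e2: "f (c 0 (q j)) = c 0 (q (q j))" "q (q j) < 3" using q[OF e1(2)] by blast+
    have "c 0 j \<in> level A le 0" using j unfolding P0_def[symmetric] P0 by blast
    then have "f (f (c 0 j)) = f (c 0 j)" using assms(6) by blast
    then have "c 0 (q (q j)) = c 0 (q j)" using e1 e2 by simp
    then show "q (q j) = q j" using c0inj e1(2) e2(2) by blast
  qed
  have P0e: "P0 = {c 0 0, c 0 1, c 0 2}" unfolding P0 using three_cases by auto
  have injc: "inj_on (c 0) {0,1,2}"
  proof (rule inj_onI)
    fix x y assume xy: "x \<in> {0::nat,1,2}" "y \<in> {0::nat,1,2}" "c 0 x = c 0 y"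
    have "x < 3" "y < 3" using xy(1,2) by auto
    then show "x = y" using c0inj[OF xy(3)] by blast
  qed
  have sub: "{x, y, z} \<subseteq> {0::nat,1,2}" if "x < 3" "y < 3" "z < 3" for x y z
    using that three_cases by blast
  have p012: "p 0 < 3" "p 1 < 3" "p 2 < 3" using p by simp_all
  have q012: "q 0 < 3" "q 1 < 3" "q 2 < 3" using q by simp_all
  have "r ` P0 = {r (c 0 0), r (c 0 1), r (c 0 2)}" unfolding P0e by simp
  also have "\<dots> = c 0 ` {p 0, p 1, p 2}" using p[of 0] p[of 1] p[of 2] by simp
  finally have cr: "card (r ` P0) = card {p 0, p 1, p 2}"
    using card_image[OF inj_on_subset[OF injc sub[OF p012]]] by simp
  have "f ` P0 = {f (c 0 0), f (c 0 1), f (c 0 2)}" unfolding P0e by simp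
  also have "\<dots> = c 0 ` {q 0, q 1, q 2}" using q[of 0] q[of 1] q[of 2] by simp
  finally have cf: "card (f ` P0) = card {q 0, q 1, q 2}"
    using card_image[OF inj_on_subset[OF injc sub[OF q012]]] by simp
  have ccard: "card {p 0, p 1, p 2} = card {q 0, q 1, q 2}"
    using cr cf assms(3,7) unfolding P0_def by simp
  have tp: "idt (p 0) (p 1) (p 2)" using idem_tuples pid p by blast
  have tq: "idt (q 0) (q 1) (q 2)" using idem_tuples qid q by blast
  obtain u a where u: "u \<in> {1,2}" "a < 3"
    and ua: "\<forall>j<3. (u * tab (p 0) (p 1) (p 2) j + a) mod 3 = tab (q 0) (q 1) (q 2) ((u*j+a) mod 3)"
    using comb0[OF tp tq ccard] by blast
  have tabp: "tab (p 0) (p 1) (p 2) j = p j" if "j < 3" for j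
    using three_cases[OF that] unfolding tab_def by auto
  have tabq: "tab (q 0) (q 1) (q 2) j = q j" if "j < 3" for j
    using three_cases[OF that] unfolding tab_def by auto
  have h0: "0 \<le> height A le" by simp
  have T0: "S.T u a 0 j = (u*j+a) mod 3" for j unfolding S.T_def by simp
  have comm: "\<forall>y\<in>P0. S.phi u a (r y) = f (S.phi u a y)"
  proof
    fix y assume "y \<in> P0"
    then obtain j where j: "y = c 0 j" "j < 3" unfolding P0 by blast
    have pj: "p j < 3" "r (c 0 j) = c 0 (p j)" using p[OF j(2)] by blast+
    have m3: "(u*j+a) mod 3 < 3" by simp
    have "S.phi u a (r y) = c 0 ((u * p j + a) mod 3)" unfolding j(1) pj(2) S.phi_c[OF h0 pj(1)] T0 by simp
    also have "(u * p j + a) mod 3 = q ((u*j+a) mod 3)" using ua[rule_format, OF j(2)] unfolding tabp[OF j(2)] tabq[OF m3] .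
    also have "c 0 (q ((u*j+a) mod 3)) = f (c 0 ((u*j+a) mod 3))" using q[OF m3] by simp
    also have "\<dots> = f (S.phi u a y)" unfolding j(1) S.phi_c[OF h0 j(2)] T0 by simp
    finally show "S.phi u a (r y) = f (S.phi u a y)" .
  qed
  have P0s: "\<forall>x\<in>P0. \<exists>y\<in>P0. S.phi u a y = x"
  proof
    fix x assume "x \<in> P0"
    then obtain j where j: "x = c 0 j" "j < 3" unfolding P0 by blast
    obtain i where i: "i < 3" "(u*i+a) mod 3 = j" using affine_surj[OF u(1) j(2)] by blast
    have "S.phi u a (c 0 i) = x" unfolding S.phi_c[OF h0 i(1)] T0 i(2) j(1) by simp
    moreover have "c 0 i \<in> P0" unfolding P0 using i(1) by blast
    ultimately show "\<exists>y\<in>P0. S.phi u a y = x" by blast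
  qed
  show ?thesis
    using conj_retr[OF S.phi_props[OF u(1)] po assms(2) P0A P0s comm]
    unfolding P0_def .
qed
end
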